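(* Let $p$ be a prime and $e$ an integer with $1\le e<p$. Then there are infinitely many distinct $c\in\mathbb{C}$ such that the correspondence on $\mathbb{A}^1$ defined by $y^e=x^p+c$ is postcritically constrained.
   Context: For polynomials $f,g\in\mathbb{C}[z]$ with $\deg f>\deg g\ge1$, the correspondence $g(y)=f(x)$ is $C=\{(a,b)\in\mathbb{C}^2:g(b)=f(a)\}$. A critical point is $a$ with $f'(a)=0$ or $g'(b)=0$ for some $b$ with $g(b)=f(a)$. A path is a sequence $(x_n)_{n\ge0}$ with $(x_n,x_{n+1})\in C$ for all $n$, starting at $x_0$; it is preperiodic if $(x_{n+j})_{j\ge0}=(x_{m+j})_{j\ge0}$ for some $n\ne m$. $C$ is postcritically constrained if every critical point starts at least one preperiodic path. *)

theory Defs
  imports Complex_Main "HOL-Computational_Algebra.Polynomial"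
begin

definition corr :: "complex poly \<Rightarrow> complex poly \<Rightarrow> (complex \<times> complex) set" where
  "corr f g = {(a, b). poly g b = poly f a}"

definition critical_point :: "complex poly \<Rightarrow> complex poly \<Rightarrow> complex \<Rightarrow> bool" where
  "critical_point f g a \<longleftrightarrow>
     poly (pderiv f) a = 0 \<or> (\<exists>b. poly g b = poly f a \<and> poly (pderiv g) b = 0)"

definition is_path :: "complex poly \<Rightarrow> complex poly \<Rightarrow> (nat \<Rightarrow> complex) \<Rightarrow> bool" where
  "is_path f g x \<longleftrightarrow> (\<forall>n. (x n, x (Suc n)) \<in> corr f g)"

definition preperiodic_seq :: "(nat \<Rightarrow> 'a) \<Rightarrow> bool" where
  "preperiodic_seq x \<longleftrightarrow> (\<exists>n m. n \<noteq> m \<and> (\<lambda>j. x (n + j)) = (\<lambda>j. x (m + j)))"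

definition postcritically_constrained :: "complex poly \<Rightarrow> complex poly \<Rightarrow> bool" where
  "postcritically_constrained f g \<longleftrightarrow>
     (\<forall>a. critical_point f g a \<longrightarrow> (\<exists>x. is_path f g x \<and> x 0 = a \<and> preperiodic_seq x))"

end

theory Submission
  imports Defs "HOL-Complex_Analysis.Complex_Analysis"
begin


lemma pow_le_base: "(a::real)^n \<le> b^n \<Longrightarrow> 0 \<le> a \<Longrightarrow> 0 \<le> b \<Longrightarrow> 0 < n \<Longrightarrow> a \<le> b"
  by (simp add: power_mono_iff)
lemma pow_eq_base: "(a::real)^n = b^n \<Longrightarrow> 0 \<le> a \<Longrightarrow> 0 \<le> b \<Longrightarrow> 0 < n \<Longrightarrow> a = b"
  by (simp add: power_eq_iff_eq_base)

definition pth :: "nat \<Rightarrow> nat \<Rightarrow> complex \<Rightarrow> (nat \<Rightarrow> complex) \<Rightarrow> bool" where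
  "pth p e c x \<longleftrightarrow> (\<forall>n. x (Suc n) ^ e = x n ^ p + c)"

definition Mset :: "nat \<Rightarrow> nat \<Rightarrow> complex set" where
  "Mset p e = {c. \<exists>x K. pth p e c x \<and> x 0 = 0 \<and> (\<forall>n. norm (x n) \<le> K)}"

definition good :: "nat \<Rightarrow> nat \<Rightarrow> complex \<Rightarrow> bool" where
  "good p e c \<longleftrightarrow> (\<exists>x N. pth p e c x \<and> x 0 = 0 \<and> 0 < N \<and> x N = 0)"

lemma periodic_from_cycle:
  assumes "0 < N" "z 0 = 0" "z N = 0" "\<forall>k<N. z (Suc k) ^ e = z k ^ p + c"
  shows "pth p e c (\<lambda>j. z (j mod N))"
  unfolding pth_def
proof
  fix j
  have m: "j mod N < N" using assms(1) by simp
  have "z (Suc j mod N) = z (Suc (j mod N))"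
  proof (cases "Suc (j mod N) = N")
    case True
    then show ?thesis using assms(2,3) by (simp add: mod_Suc)
  next
    case False
    then show ?thesis by (simp add: mod_Suc)
  qed
  then show "z (Suc j mod N) ^ e = z (j mod N) ^ p + c"
    using assms(4) m by simp
qed

lemma cyc_good:
  assumes "0 < N" "z 0 = 0" "z N = 0" "\<forall>k<N. z (Suc k) ^ e = z k ^ p + c"
  shows "good p e c"
  unfolding good_def
  using periodic_from_cycle[OF assms] assms by (intro exI[of _ "\<lambda>j. z (j mod N)"] exI[of _ N]) simp

definition croot :: "nat \<Rightarrow> complex \<Rightarrow> complex" where
  "croot e w = (if w = 0 then 0 else exp (Ln w / of_nat e))"

lemma croot_pow: assumes "0 < e" shows "croot e w ^ e = w"
proof (cases "w = 0")
  case True then show ?thesis using assms by (simp add: croot_def)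
next
  case False
  have "exp (Ln w / of_nat e) ^ e = exp (of_nat e * (Ln w / of_nat e))"
    by (rule exp_of_nat_mult[symmetric])
  also have "\<dots> = exp (Ln w)" using assms by simp
  also have "\<dots> = w" using False by simp
  finally show ?thesis using False by (simp add: croot_def)
qed

lemma small_in_M:
  assumes "1 \<le> e" "e < p" "norm c \<le> (1/2) ^ p"
  shows "c \<in> Mset p e"
proof -
  define x where "x = rec_nat 0 (\<lambda>n xn. croot e (xn ^ p + c))"
  have x0: "x 0 = 0" and xS: "\<And>n. x (Suc n) = croot e (x n ^ p + c)" by (simp_all add: x_def)
  have pth: "pth p e c x" unfolding pth_def using xS croot_pow assms(1) by simp
  have bnd: "norm (x n) \<le> 1/2" for n
  proof (induction n)
    case 0 then show ?case by (simp add: x0)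
  next
    case (Suc n)
    have "norm (x (Suc n)) ^ e = norm (x n ^ p + c)"
      using pth unfolding pth_def by (metis norm_power)
    also have "\<dots> \<le> norm (x n) ^ p + norm c"
      by (metis norm_power norm_triangle_ineq)
    also have "\<dots> \<le> (1/2) ^ p + (1/2) ^ p"
      using Suc.IH assms(3) by (intro add_mono power_mono) auto
    also have "\<dots> = (1/2) ^ (p - 1)"
      using assms by (cases p) auto
    also have "\<dots> \<le> (1/2) ^ e"
      using assms by (intro power_decreasing) auto
    finally have "norm (x (Suc n)) ^ e \<le> (1/2) ^ e" .
    from pow_le_base[OF this norm_ge_zero] assms(1) show ?case by simp
  qed
  show ?thesis unfolding Mset_def using pth x0 bnd by blast
qed

lemma large_notin_M:
  assumes "1 \<le> e" "e < p" "norm c = (2 ^ (e+1)) ^ e"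
  shows "c \<notin> Mset p e"
proof
  assume "c \<in> Mset p e"
  then obtain x K where pth: "pth p e c x" and x0: "x 0 = 0" and K: "\<And>n. norm (x n) \<le> K"
    unfolding Mset_def by blast
  have rel: "norm (x (Suc n)) ^ e = norm (x n ^ p + c)" for n
    using pth unfolding pth_def by (metis norm_power)
  have grow: "norm (x (Suc n)) \<ge> 2 ^ (e+1) * 2 ^ n" for n
  proof (induction n)
    case 0
    have "norm (x (Suc 0)) ^ e = (2 ^ (e+1)) ^ e"
      using rel[of 0] x0 assms by (simp add: zero_power)
    from pow_eq_base[OF this norm_ge_zero] assms(1) have "norm (x (Suc 0)) = 2 ^ (e+1)" by simp
    then show ?case by simp
  next
    case (Suc n)
    define t where "t = norm (x (Suc n))"
    have t1: "t \<ge> 2 ^ (e+1)"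
      using Suc.IH unfolding t_def
      by (smt (verit, ccfv_SIG) mult_le_cancel_left1 one_le_power zero_le_power)
    have tpos: "t \<ge> 1" using t1 by (smt (verit) one_le_power)
    have te: "norm c \<le> t ^ e" unfolding assms(3) by (rule power_mono[OF t1]) simp
    have "t ^ p = t ^ (p - e) * t ^ e" using assms by (simp flip: power_add)
    also have "\<dots> \<ge> t * t ^ e"
      using tpos assms by (intro mult_right_mono) (auto simp: power_increasing[of 1 "p-e" t, simplified])
    finally have tp: "t ^ p \<ge> t * t ^ e" .
    have "2 ^ (e+1) * t ^ e \<le> t * t ^ e" by (rule mult_right_mono[OF t1]) (use tpos in simp)
    then have tp2: "t ^ p \<ge> 2 * 2 ^ e * t ^ e" using tp by simp
    have "norm (x (Suc (Suc n))) ^ e = norm (x (Suc n) ^ p + c)" by (rule rel)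
    also have "\<dots> \<ge> t ^ p - norm c"
      unfolding t_def by (metis norm_diff_ineq norm_minus_cancel diff_minus_eq_add norm_power)
    finally have "norm (x (Suc (Suc n))) ^ e \<ge> t ^ p - norm c" .
    moreover have "(2*t)^e = 2^e * t^e" by (simp add: power_mult_distrib)
    moreover have "1 * t^e \<le> 2^e * t^e" by (rule mult_right_mono) (use tpos in simp_all)
    ultimately have "norm (x (Suc (Suc n))) ^ e \<ge> (2 * t) ^ e"
      using tp2 te by simp
    from pow_le_base[OF this] assms(1) tpos have "norm (x (Suc (Suc n))) \<ge> 2 * t" by simp
    then show ?case using Suc.IH unfolding t_def by simp
  qed
  obtain n :: nat where "K < n" using reals_Archimedean2 by blast
  have "real n < 2 ^ n" by (rule of_nat_less_two_power)
  also have "(2::real) ^ n \<le> 2 ^ (e+1) * 2 ^ n"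
    using mult_right_mono[OF one_le_power[of "2::real" "e+1"], of "2^n"] by simp
  also have "\<dots> \<le> norm (x (Suc n))" by (rule grow)
  also have "\<dots> \<le> K" by (rule K)
  finally show False using \<open>K < n\<close> by simp
qed



lemma poly_f: "poly (monom 1 p + [:c:]) (a::complex) = a ^ p + c"
  by (simp add: poly_monom)

lemma poly_g: "poly (monom 1 e) (b::complex) = b ^ e"
  by (simp add: poly_monom)

lemma poly_df: "poly (pderiv (monom 1 p + [:c:])) (a::complex) = of_nat p * a ^ (p - 1)"
  by (simp add: pderiv_add pderiv_monom poly_monom pderiv_pCons)

lemma poly_dg: "poly (pderiv (monom 1 e)) (b::complex) = of_nat e * b ^ (e - 1)"
  by (simp add: pderiv_monom poly_monom)

lemma good_periodic:
  assumes "good p e c"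
  obtains y N where "pth p e c y" "y 0 = 0" "0 < N" "\<And>j. y (N + j) = y j"
proof -
  obtain x N where x: "pth p e c x" "x 0 = 0" "0 < N" "x N = 0"
    using assms unfolding good_def by blast
  have rel: "\<forall>k<N. x (Suc k) ^ e = x k ^ p + c" using x(1) unfolding pth_def by blast
  have "pth p e c (\<lambda>j. x (j mod N))" by (rule periodic_from_cycle[OF x(3,2,4) rel])
  moreover have "(\<lambda>j. x (j mod N)) 0 = 0" using x by simp
  moreover have "\<And>j. (\<lambda>j. x (j mod N)) (N + j) = (\<lambda>j. x (j mod N)) j" by simp
  ultimately show ?thesis using that x(3) by blast
qed

lemma good_pcc:
  assumes "2 \<le> p" "1 \<le> e" "good p e c"
  shows "postcritically_constrained (monom 1 p + [:c:]) (monom 1 e)"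
  unfolding postcritically_constrained_def
proof (intro allI impI)
  fix a assume cp: "critical_point (monom 1 p + [:c:]) (monom 1 e) a"
  obtain y N where y: "pth p e c y" "y 0 = 0" "0 < N" "\<And>j. y (N + j) = y j"
    using good_periodic[OF assms(3)] by blast
  have ypath: "is_path (monom 1 p + [:c:]) (monom 1 e) y"
    using y(1) unfolding is_path_def corr_def pth_def by (simp add: poly_f poly_g)
  have ypre: "preperiodic_seq y"
    unfolding preperiodic_seq_def using y(3,4) by (intro exI[of _ 0] exI[of _ N]) auto
  have "a = 0 \<or> a ^ p + c = 0"
  proof (cases "poly (pderiv (monom 1 p + [:c:])) a = 0")
    case True
    then have "a ^ (p - 1) = 0" using assms(1) by (simp add: poly_df)
    then have "a = 0" using assms(1) by simp
    then show ?thesis by simp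
  next
    case False
    then obtain b where b: "b ^ e = a ^ p + c" "of_nat e * b ^ (e - 1) = 0"
      using cp unfolding critical_point_def by (auto simp: poly_f poly_g poly_dg)
    have "e \<noteq> 1" using b(2) by auto
    then have "b = 0" using b(2) assms(2) by simp
    then have "a ^ p + c = 0" using b(1) assms(2) by (simp add: zero_power)
    then show ?thesis by simp
  qed
  then show "\<exists>x. is_path (monom 1 p + [:c:]) (monom 1 e) x \<and> x 0 = a \<and> preperiodic_seq x"
  proof
    assume "a = 0" then show ?thesis using ypath ypre y(2) by auto
  next
    assume a: "a ^ p + c = 0"
    define z where "z = (\<lambda>j. case j of 0 \<Rightarrow> a | Suc k \<Rightarrow> y k)"
    have "is_path (monom 1 p + [:c:]) (monom 1 e) z"
      unfolding is_path_def corr_def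
    proof (intro allI, simp add: poly_f poly_g)
      fix n show "z (Suc n) ^ e = z n ^ p + c"
        using y(1,2) a assms(2) unfolding z_def pth_def by (cases n) auto
    qed
    moreover have "preperiodic_seq z"
      unfolding preperiodic_seq_def using y(3,4)
      by (intro exI[of _ 1] exI[of _ "N+1"]) (auto simp: z_def)
    ultimately show ?thesis by (intro exI[of _ z]) (simp add: z_def)
  qed
qed

lemma hol_root:
  assumes "0 < e" "F holomorphic_on ball c0 r" "\<And>c. c \<in> ball c0 r \<Longrightarrow> F c \<noteq> 0"
    "w ^ e = F c0" "0 < r"
  shows "\<exists>g. g holomorphic_on ball c0 r \<and> (\<forall>c\<in>ball c0 r. g c ^ e = F c) \<and> g c0 = w"
proof -
  have c0: "c0 \<in> ball c0 r" using assms(5) by simp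
  obtain L where L: "L holomorphic_on ball c0 r" "\<And>x. x \<in> ball c0 r \<Longrightarrow> exp (L x) = F x"
    using holomorphic_logarithm_exists[OF convex_ball open_ball assms(2) assms(3) c0] by blast
  define g0 where "g0 = (\<lambda>c. exp (L c / of_nat e))"
  have g0e: "g0 c ^ e = F c" if "c \<in> ball c0 r" for c
  proof -
    have "g0 c ^ e = exp (of_nat e * (L c / of_nat e))"
      unfolding g0_def by (rule exp_of_nat_mult[symmetric])
    also have "\<dots> = exp (L c)" using assms(1) by simp
    finally show ?thesis using L(2)[OF that] by simp
  qed
  have g0h: "g0 holomorphic_on ball c0 r"
    unfolding g0_def using L(1) by (intro holomorphic_intros) auto
  define \<omega> where "\<omega> = w / g0 c0"
  have g0nz: "g0 c0 \<noteq> 0" unfolding g0_def by simp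
  have "\<omega> ^ e = w ^ e / g0 c0 ^ e" unfolding \<omega>_def by (simp add: power_divide)
  also have "\<dots> = 1" using assms(4) g0e[OF c0] assms(3)[OF c0] by simp
  finally have om: "\<omega> ^ e = 1" .
  show ?thesis
  proof (intro exI[of _ "\<lambda>c. \<omega> * g0 c"] conjI ballI)
    show "(\<lambda>c. \<omega> * g0 c) holomorphic_on ball c0 r" using g0h by (intro holomorphic_intros)
    show "(\<omega> * g0 c) ^ e = F c" if "c \<in> ball c0 r" for c
      using om g0e[OF that] by (simp add: power_mult_distrib)
    show "\<omega> * g0 c0 = w" using g0nz unfolding \<omega>_def by simp
  qed
qed



lemma main_lemma:
  fixes p e :: nat and c0 c1 :: complex and \<rho> \<rho>' :: real
  assumes e1: "1 \<le> e" and ep: "e < p" and c0M: "c0 \<in> Mset p e" and c1M: "c1 \<notin> Mset p e"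
    and d: "dist c0 c1 < \<rho>" and rr: "\<rho> < \<rho>'" and rn: "\<rho>' < norm c0"
  shows "\<exists>c\<in>ball c0 \<rho>'. good p e c"
proof (rule ccontr)
  assume ng: "\<not> ?thesis"
  define S where "S = ball c0 \<rho>'"
  have ngS: "\<not> good p e c" if "c \<in> S" for c using ng that unfolding S_def by auto
  have \<rho>pos: "0 < \<rho>" using d zero_le_dist[of c0 c1] by linarith
  have \<rho>'pos: "0 < \<rho>'" using \<rho>pos rr by linarith
  have nz: "c \<noteq> 0" if "c \<in> S" for c
  proof
    assume "c = 0"
    then have "dist c0 0 < \<rho>'" using that unfolding S_def by simp
    then show False using rn by simp
  qed
  obtain a K where a: "pth p e c0 a" "a 0 = 0" "\<And>n. norm (a n) \<le> K"
    using c0M unfolding Mset_def by blast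
  have K0: "0 \<le> K" using a(3)[of 0] norm_ge_zero[of "a 0"] by linarith
  define X where "X = rec_nat (\<lambda>c::complex. 0::complex)
     (\<lambda>n Xn. SOME g. g holomorphic_on S \<and> (\<forall>c\<in>S. g c ^ e = Xn c ^ p + c) \<and> g c0 = a (Suc n))"
  have X0: "X 0 = (\<lambda>c. 0)" by (simp add: X_def)
  have XS: "X (Suc n) = (SOME g. g holomorphic_on S \<and> (\<forall>c\<in>S. g c ^ e = X n c ^ p + c) \<and> g c0 = a (Suc n))" for n
    by (simp add: X_def)
  define I where "I n \<longleftrightarrow> X n holomorphic_on S \<and> X n c0 = a n \<and>
      (\<forall>k<n. \<forall>c\<in>S. X (Suc k) c ^ e = X k c ^ p + c)" for n
  have nz2: "X n c ^ p + c \<noteq> 0" if In: "I n" and cS: "c \<in> S" for n c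
  proof
    assume z: "X n c ^ p + c = 0"
    define zz where "zz = (\<lambda>k. if k \<le> n then X k c else 0)"
    have "\<forall>k<Suc n. zz (Suc k) ^ e = zz k ^ p + c"
    proof (intro allI impI)
      fix k assume k: "k < Suc n"
      show "zz (Suc k) ^ e = zz k ^ p + c"
      proof (cases "k < n")
        case True
        then show ?thesis using In cS unfolding I_def zz_def by auto
      next
        case False
        then have "k = n" using k by simp
        then show ?thesis using z e1 unfolding zz_def by (simp add: zero_power)
      qed
    qed
    moreover have "zz 0 = 0" by (simp add: zz_def X0)
    moreover have "zz (Suc n) = 0" by (simp add: zz_def)
    ultimately have "good p e c" by (intro cyc_good[of "Suc n" zz]) auto
    with ngS cS show False by blast
  qed
  have Istep: "I (Suc n)" if In: "I n" for n
  proof -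
    have "\<exists>g. g holomorphic_on S \<and> (\<forall>c\<in>S. g c ^ e = X n c ^ p + c) \<and> g c0 = a (Suc n)"
      unfolding S_def
    proof (rule hol_root)
      show "0 < e" using e1 by simp
      show "(\<lambda>c. X n c ^ p + c) holomorphic_on ball c0 \<rho>'"
        using In unfolding I_def S_def by (intro holomorphic_intros) auto
      show "X n c ^ p + c \<noteq> 0" if "c \<in> ball c0 \<rho>'" for c
        using nz2[OF In] that unfolding S_def by blast
      show "a (Suc n) ^ e = X n c0 ^ p + c0"
        using a(1) In unfolding pth_def I_def by simp
      show "0 < \<rho>'" by (rule \<rho>'pos)
    qed
    then have spec: "X (Suc n) holomorphic_on S \<and> (\<forall>c\<in>S. X (Suc n) c ^ e = X n c ^ p + c) \<and> X (Suc n) c0 = a (Suc n)"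
      unfolding XS by (rule someI_ex)
    then show ?thesis using In unfolding I_def by (auto simp: less_Suc_eq)
  qed
  have I: "I n" for n
  proof (induction n)
    case 0 then show ?case unfolding I_def X0 using a(2) by auto
  next
    case (Suc n) then show ?case by (rule Istep)
  qed
  have Xnz: "X n c \<noteq> 0" if n0: "0 < n" and cS: "c \<in> S" for n c
  proof
    assume z: "X n c = 0"
    have "\<forall>k<n. X (Suc k) c ^ e = X k c ^ p + c" using I[of n] cS unfolding I_def by blast
    then have "good p e c" using z n0 by (intro cyc_good[of n "\<lambda>k. X k c"]) (auto simp: X0)
    with ngS cS show False by blast
  qed
  have c01: "c0 \<noteq> c1" using c0M c1M by auto
  define z1 where "z1 = (c1 - c0) / of_real \<rho>"
  have c1z: "c0 + of_real \<rho> * z1 = c1" using \<rho>pos by (simp add: z1_def)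
  have nz1: "norm z1 = dist c0 c1 / \<rho>" using \<rho>pos
    by (simp add: z1_def norm_divide dist_norm norm_minus_commute)
  have t0: "0 < norm z1" using c01 \<rho>pos nz1 by simp
  have t1: "norm z1 < 1" using d \<rho>pos nz1 by simp
  have inS: "c0 + of_real \<rho> * z \<in> S" if "z \<in> cball 0 1" for z
  proof -
    have "dist c0 (c0 + of_real \<rho> * z) = \<rho> * norm z" using \<rho>pos by (simp add: dist_norm norm_mult)
    also have "\<dots> \<le> \<rho>" using that \<rho>pos by (simp add: mult_le_cancel_left1)
    finally show ?thesis using rr unfolding S_def by simp
  qed
  have c1S: "c1 \<in> S" using inS[of z1] c1z t1 by simp
  define r where "r = K ^ p / norm c0"
  define B where "B = exp(pi * exp(pi * (2 + 2 * r + 12 * norm z1 / (1 - norm z1))))"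
  define H where "H n c = - (X (Suc n) c ^ p) / c" for n c
  have hb: "norm (H n c1) \<le> B" for n
  proof -
    have eq: "H n c1 = (H n \<circ> (\<lambda>z. c0 + of_real \<rho> * z)) z1" using c1z by simp
    have "norm ((H n \<circ> (\<lambda>z. c0 + of_real \<rho> * z)) z1) \<le> B"
      unfolding B_def
    proof (rule Schottky[where f="H n \<circ> (\<lambda>z. c0 + of_real \<rho> * z)" and z=z1 and t="norm z1" and r=r])
      have "H n holomorphic_on S"
        unfolding H_def using I[of "Suc n"] nz unfolding I_def by (intro holomorphic_intros) auto
      then show "(H n \<circ> (\<lambda>z. c0 + of_real \<rho> * z)) holomorphic_on cball 0 1"
        by (rule holomorphic_on_compose_gen[rotated]) (use inS in \<open>auto intro!: holomorphic_intros\<close>)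
      have "norm ((H n \<circ> (\<lambda>z. c0 + of_real \<rho> * z)) 0) = norm (a (Suc n)) ^ p / norm c0"
        using I[of "Suc n"] unfolding H_def I_def by (simp add: norm_divide norm_power)
      also have "\<dots> \<le> K ^ p / norm c0"
        by (intro divide_right_mono power_mono a(3)) auto
      finally show "norm ((H n \<circ> (\<lambda>z. c0 + of_real \<rho> * z)) 0) \<le> r" unfolding r_def .
      show "\<not> ((H n \<circ> (\<lambda>z. c0 + of_real \<rho> * z)) z = 0 \<or> (H n \<circ> (\<lambda>z. c0 + of_real \<rho> * z)) z = 1)"
        if "z \<in> cball 0 1" for z
      proof -
        define c where "c = c0 + of_real \<rho> * z"
        have cS: "c \<in> S" unfolding c_def by (rule inS[OF that])
        have "H n c \<noteq> 0" unfolding H_def using Xnz[of "Suc n" c] nz[OF cS] cS by simp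
        moreover have "H n c \<noteq> 1"
        proof
          assume "H n c = 1"
          then have "- (X (Suc n) c ^ p) / c = 1" unfolding H_def by simp
          then have "- (X (Suc n) c ^ p) = c" using nz[OF cS] by (auto simp: field_simps)
          then have "X (Suc n) c ^ p + c = 0" by (simp add: add_eq_0_iff)
          then show False using nz2[OF I cS] by blast
        qed
        ultimately show ?thesis unfolding c_def by simp
      qed
    qed (use t0 t1 in auto)
    then show ?thesis using eq by simp
  qed
  have c1nz: "c1 \<noteq> 0" by (rule nz[OF c1S])
  define K' where "K' = max 1 (B * norm c1)"
  have Xb: "norm (X n c1) \<le> K'" for n
  proof (cases n)
    case 0 then show ?thesis by (simp add: X0 K'_def)
  next
    case (Suc m)
    have "norm (X (Suc m) c1) ^ p / norm c1 \<le> B"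
      using hb[of m] unfolding H_def by (simp add: norm_divide norm_power)
    then have P: "norm (X (Suc m) c1) ^ p \<le> B * norm c1"
      using c1nz by (simp add: divide_le_eq)
    show ?thesis
    proof (cases "norm (X (Suc m) c1) \<le> 1")
      case True then show ?thesis using Suc by (simp add: K'_def)
    next
      case False
      then have "norm (X (Suc m) c1) \<le> norm (X (Suc m) c1) ^ p"
        using ep by (intro self_le_power) auto
      then show ?thesis using P Suc by (simp add: K'_def)
    qed
  qed
  have "pth p e c1 (\<lambda>n. X n c1)"
    unfolding pth_def using I c1S unfolding I_def by blast
  then have "c1 \<in> Mset p e" unfolding Mset_def using Xb X0 by fastforce
  with c1M show False by contradiction
qed



lemma dist_ray:
  fixes u :: complex and x y :: real
  assumes "norm u = 1"
  shows "dist (of_real x * u) (of_real y * u) = \<bar>x - y\<bar>"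
proof -
  have "dist (of_real x * u) (of_real y * u) = norm (of_real (x - y) * u)"
    unfolding dist_norm by (simp add: algebra_simps)
  also have "\<dots> = \<bar>x - y\<bar>" using assms by (simp only: norm_mult norm_of_real) simp
  finally show ?thesis .
qed

lemma norm_ray: "norm (u::complex) = 1 \<Longrightarrow> norm (of_real x * u) = \<bar>x\<bar>"
  by (simp add: norm_mult)

lemma boundary_good:
  assumes e1: "1 \<le> e" and ep: "e < p" and fin: "finite {c. good p e c}" and u: "norm u = 1"
  shows "\<exists>s\<ge>(1/2)^p. good p e (of_real s * u)"
proof -
  define G where "G = {c. good p e c}"
  define r0 :: real where "r0 = (1/2)^p"
  define R0 :: real where "R0 = (2^(e+1))^e"
  have r0pos: "0 < r0" unfolding r0_def by simp
  have r0le1: "r0 \<le> 1" unfolding r0_def by (simp add: power_le_one)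
  have R0ge1: "1 \<le> R0" unfolding R0_def by (rule one_le_power, rule one_le_power) simp
  define T where "T = {t. r0 \<le> t \<and> t \<le> R0 \<and> of_real t * u \<in> Mset p e}"
  have r0T: "r0 \<in> T"
    unfolding T_def using r0le1 R0ge1 small_in_M[OF e1 ep, of "of_real r0 * u"] norm_ray[OF u, of r0] r0pos
    by (simp add: r0_def)
  have bdd: "bdd_above T" unfolding T_def by (intro bdd_aboveI[of _ R0]) auto
  have Tne: "T \<noteq> {}" using r0T by blast
  define s where "s = Sup T"
  have s_ge: "r0 \<le> s" unfolding s_def by (rule cSup_upper[OF r0T bdd])
  have s_le: "s \<le> R0" unfolding s_def by (rule cSup_least[OF Tne]) (auto simp: T_def)
  have R0notM: "of_real R0 * u \<notin> Mset p e"
    using large_notin_M[OF e1 ep] norm_ray[OF u, of R0] R0ge1 by (simp add: R0_def)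
  define b where "b = of_real s * u"
  have "b \<in> closure G"
    unfolding closure_approachable
  proof (intro allI impI)
    fix \<epsilon> :: real assume \<epsilon>: "0 < \<epsilon>"
    define \<epsilon>' where "\<epsilon>' = min \<epsilon> (r0/2)"
    have \<epsilon>'pos: "0 < \<epsilon>'" using \<epsilon> r0pos by (simp add: \<epsilon>'_def)
    have \<epsilon>'le: "\<epsilon>' \<le> \<epsilon>" "2 * \<epsilon>' \<le> r0" by (auto simp: \<epsilon>'_def)
    obtain t1 where t1: "t1 \<in> T" "s - \<epsilon>'/4 < t1"
      using less_cSupD[OF Tne, of "s - \<epsilon>'/4"] \<epsilon>'pos unfolding s_def by auto
    have t1s: "t1 \<le> s" unfolding s_def by (rule cSup_upper[OF t1(1) bdd])
    define c0 where "c0 = of_real t1 * u"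
    have c0M: "c0 \<in> Mset p e" using t1(1) unfolding T_def c0_def by simp
    have dc0: "dist c0 b < \<epsilon>'/4" unfolding c0_def b_def dist_ray[OF u] using t1 t1s by simp
    define t2 where "t2 = min (s + \<epsilon>'/4) R0"
    have t2s: "s \<le> t2" using s_le \<epsilon>'pos by (simp add: t2_def)
    define c1 where "c1 = of_real t2 * u"
    have c1M: "c1 \<notin> Mset p e"
    proof
      assume "c1 \<in> Mset p e"
      then have "t2 \<in> T" unfolding T_def c1_def using s_ge t2s by (simp add: t2_def)
      then have "t2 \<le> s" unfolding s_def by (rule cSup_upper[OF _ bdd])
      then have "R0 = t2" using \<epsilon>'pos s_le unfolding t2_def by (simp add: min_def split: if_splits)
      then show False using \<open>c1 \<in> Mset p e\<close> R0notM unfolding c1_def by simp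
    qed
    have "t2 \<le> s + \<epsilon>'/4" by (simp add: t2_def)
    then have dc1: "dist c1 b \<le> \<epsilon>'/4" unfolding c1_def b_def dist_ray[OF u] using t2s by simp
    have d01: "dist c0 c1 < \<epsilon>'/2" using dc0 dc1 dist_triangle[of c0 c1 b] by (simp add: dist_commute)
    have nc0: "3 * \<epsilon>'/4 < norm c0"
      unfolding c0_def norm_ray[OF u] using t1 s_ge \<epsilon>'le \<epsilon>'pos by simp
    obtain c where c: "c \<in> ball c0 (3 * \<epsilon>'/4)" "good p e c"
      using main_lemma[OF e1 ep c0M c1M d01, of "3 * \<epsilon>'/4"] \<epsilon>'pos nc0 by auto
    have "dist c b < \<epsilon>'"
      using c(1) dc0 dist_triangle[of c b c0] by (simp add: dist_commute)
    then show "\<exists>y\<in>G. dist y b < \<epsilon>" using c(2) \<epsilon>'le unfolding G_def by force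
  qed
  moreover have "closure G = G" using fin unfolding G_def by (simp add: finite_imp_closed)
  ultimately have "good p e b" unfolding G_def by simp
  then show ?thesis using s_ge unfolding b_def r0_def by blast
qed

theorem theorem1p4:
  fixes p e :: nat
  assumes "prime p" and "1 \<le> e" and "e < p"
  shows "infinite {c :: complex.
           postcritically_constrained (monom 1 p + [:c:]) (monom 1 e)}"
proof -
  have p2: "2 \<le> p" using assms(1) by (rule prime_ge_2_nat)
  have infG: "infinite {c. good p e c}"
  proof
    assume fin: "finite {c. good p e c}"
    define u where "u \<theta> = Complex \<theta> (sqrt (1 - \<theta>^2))" for \<theta> :: real
    have nu: "norm (u \<theta>) = 1" if "\<theta> \<in> {0..1}" for \<theta>
    proof -
      have "\<theta>^2 \<le> 1" using that by (simp add: power_le_one abs_le_iff)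
      then show ?thesis unfolding u_def by (simp add: cmod_def)
    qed
    define s where "s \<theta> = (SOME s. s \<ge> (1/2)^p \<and> good p e (of_real s * u \<theta>))" for \<theta>
    have s: "s \<theta> \<ge> (1/2)^p \<and> good p e (of_real (s \<theta>) * u \<theta>)" if "\<theta> \<in> {0..1}" for \<theta>
      unfolding s_def by (rule someI_ex[OF boundary_good[OF assms(2,3) fin nu[OF that]]])
    define \<phi> where "\<phi> \<theta> = of_real (s \<theta>) * u \<theta>" for \<theta>
    have spos: "0 < s \<theta>" if "\<theta> \<in> {0..1}" for \<theta>
      using s[OF that] by (smt (verit) zero_less_power divide_pos_pos zero_less_one)
    have inj: "inj_on \<phi> {0..1}"
    proof (rule inj_onI)
      fix x y assume x: "x \<in> {0..(1::real)}" and y: "y \<in> {0..(1::real)}" and eq: "\<phi> x = \<phi> y"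
      have "norm (\<phi> x) = s x" unfolding \<phi>_def using norm_ray[OF nu[OF x]] spos[OF x] by simp
      moreover have "norm (\<phi> y) = s y" unfolding \<phi>_def using norm_ray[OF nu[OF y]] spos[OF y] by simp
      ultimately have sxy: "s x = s y" using eq by simp
      then have "u x = u y" using eq spos[OF x] unfolding \<phi>_def by simp
      then have "Re (u x) = Re (u y)" by simp
      then show "x = y" unfolding u_def by simp
    qed
    have "infinite {0..(1::real)}" by simp
    then have "infinite (\<phi> ` {0..1})"
      using finite_imageD[OF _ inj] by blast
    moreover have "\<phi> ` {0..1} \<subseteq> {c. good p e c}" using s unfolding \<phi>_def by blast
    ultimately show False using fin finite_subset by blast
  qed
  have "{c. good p e c} \<subseteq> {c. postcritically_constrained (monom 1 p + [:c:]) (monom 1 e)}"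
    using good_pcc[OF p2 assms(2)] by blast
  then show ?thesis using infG infinite_super by blast
qed


end
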